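(* Let $(\omega,c)\in\mathbb{R}^2$ satisfy: $\omega>c^2/4$, or $\omega=c^2/4$ and $c>0$. Write $c=2s\sqrt\omega$ with $s\in(-1,1]$, and let $\beta_0=\frac13(2s+\sqrt{3+s^2})$, $\beta_1=1+s$. Then the function $(\beta_0,\beta_1)\ni\eta\mapsto k(\eta)\in(0,1)$ is strictly increasing, where $$k(\eta)^2=\frac{3\eta^2+(\sqrt{f_s(\eta)}-6s)\eta+2(s^2-1)}{2\eta\sqrt{f_s(\eta)}},\qquad f_s(\eta)=-3\eta^2+4s\eta+4.$$
   Context: Equivalently, with $\eta_3=4\sqrt\omega\,\eta\in(\alpha_0,\alpha_1)$, $\alpha_0=\tfrac13(4c+\sqrt{48\omega+4c^2})$, $\alpha_1=4\sqrt\omega+2c$, $A(x)=-3x^2+8cx+64\omega$, $\eta_1=\frac{-\eta_3+4c-\sqrt{A(\eta_3)}}{2}$, $\eta_2=\frac{-\eta_3+4c+\sqrt{A(\eta_3)}}{2}$, one has $k^2=\frac{-\eta_1(\eta_3-\eta_2)}{\eta_3(\eta_2-\eta_1)}$, the elliptic modulus of the periodic solution; $f_s(\eta)>0$ on $(\beta_0,\beta_1)$. *)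

theory Defs
  imports "HOL-Analysis.Analysis"
begin

definition f_s :: "real \<Rightarrow> real \<Rightarrow> real" where
  "f_s s \<eta> = -3 * \<eta>^2 + 4 * s * \<eta> + 4"

definition k_sq :: "real \<Rightarrow> real \<Rightarrow> real" where
  "k_sq s \<eta> = (3 * \<eta>^2 + (sqrt (f_s s \<eta>) - 6 * s) * \<eta> + 2 * (s^2 - 1))
                 / (2 * \<eta> * sqrt (f_s s \<eta>))"

definition k_mod :: "real \<Rightarrow> real \<Rightarrow> real" where
  "k_mod s \<eta> = sqrt (k_sq s \<eta>)"

definition beta0 :: "real \<Rightarrow> real" where
  "beta0 s = (2 * s + sqrt (3 + s^2)) / 3"

definition beta1 :: "real \<Rightarrow> real" where
  "beta1 s = 1 + s"

end

theory Submission imports Defs begin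

lemma basic:
  fixes s e :: real
  assumes s1: "-1 < s" "s \<le> 1" and e: "beta0 s < e" "e < 1 + s"
  shows "0 < e" "0 < e - s" "e - s < 1" "0 < f_s s e"
    "(e * sqrt (f_s s e))^2 - (3 * e^2 - 6 * s * e + 2 * s^2 - 2)^2 > 0"
proof -
  define r where "r = sqrt (3 + s^2)"
  have r0: "r \<ge> 0" and r2: "r^2 = 3 + s^2" unfolding r_def by auto
  have b0: "beta0 s = (2* s + r)/3" unfolding beta0_def r_def by simp
  have rs: "r > \<bar>s\<bar>" using r0 r2 power2_less_imp_less[of "\<bar>s\<bar>" r] by simp
  have sq1: "s^2 \<le> 1" using s1 by (simp add: abs_square_le_1)
  have r2s: "r > -2* s"
  proof (cases "s \<ge> 0")
    case True then show ?thesis using r0 rs by linarith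
  next
    case False
    have "(-2* s)^2 < r^2" using r2 s1 False by (simp add: power_mult_distrib abs_square_less_1)
    then show ?thesis using r0 power2_less_imp_less[of "-2 * s" r] by simp
  qed
  show e0: "0 < e" using e b0 r2s by simp
  show es: "0 < e - s" using e b0 rs by simp
  show es1: "e - s < 1" using e by simp
  have q: "3*e^4 - 10 * s * e^3 + (12 * s^2-4)*e^2 - 6 * s * (s^2-1)*e + (s^2-1)^2
     = (e - s - 1)*(e - s + 1)*(3*e^2 - 4 * s * e + s^2 - 1)" by algebra
  have q2: "3*e^2 - 4 * s * e + s^2 - 1 = 3*((e - (2 * s+r)/3) * (e - (2 * s-r)/3))"
    using r2 by algebra
  have p1: "(e - (2 * s+r)/3) * (e - (2 * s-r)/3) > 0" using e b0 r0 by (intro mult_pos_pos) auto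
  have p2: "(e - s + 1) * (3*e^2 - 4 * s * e + s^2 - 1) > 0" using q2 p1 es by simp
  have p3: "(e - s - 1)*((e - s + 1)*(3*e^2 - 4 * s * e + s^2 - 1)) < 0"
    using p2 es1 by (intro mult_neg_pos) auto
  have D: "e^2 * f_s s e - (3 * e^2 - 6 * s * e + 2 * s^2 - 2)^2
     = -4 * (3*e^4 - 10 * s * e^3 + (12 * s^2-4)*e^2 - 6 * s * (s^2-1)*e + (s^2-1)^2)"
    unfolding f_s_def by algebra
  have Dp: "e^2 * f_s s e - (3 * e^2 - 6 * s * e + 2 * s^2 - 2)^2 > 0"
    unfolding D q using p3 by (simp add: mult.assoc)
  then have "e^2 * f_s s e > 0" by (smt (verit) zero_le_power2)
  then show fp: "0 < f_s s e" using e0 by (simp add: zero_less_mult_iff)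
  show "(e * sqrt (f_s s e))^2 - (3 * e^2 - 6 * s * e + 2 * s^2 - 2)^2 > 0"
    using Dp fp by (simp add: power_mult_distrib)
qed

lemma Qpos:
  fixes s e :: real
  assumes s1: "-1 < s" "s \<le> 1" and e: "0 < e" "e < 1 + s" "0 < e - s" "e - s < 1"
  shows "-3 * s * e^3 + 6 * s^2 * e^2 + 3 * s * (1 - s^2) * e + 2 * (1 - s^2) > 0"
proof -
  have id: "-3 * s * e^3 + 6 * s^2 * e^2 + 3 * s * (1 - s^2) * e + 2 * (1 - s^2)
     = 3 * s * (e * (1 - (e-s)^2)) + 2 * (1 - s^2)" by algebra
  have t1: "0 < 1 - (e-s)^2" using e by (simp add: abs_square_less_1)
  have t2: "e * (1 - (e-s)^2) \<le> e" using e by (simp add: mult_left_le)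
  have t3: "0 < e * (1 - (e-s)^2)" using e t1 by simp
  have sq: "s^2 \<le> 1" using s1 by (simp add: abs_square_le_1)
  show ?thesis
  proof (cases "s \<ge> 0")
    case True
    show ?thesis
    proof (cases "s = 0")
      case True then show ?thesis by simp
    next
      case False
      then have "3 * s * (e * (1 - (e-s)^2)) > 0" using True t3 by simp
      then show ?thesis unfolding id using sq by (smt (verit))
    qed
  next
    case False
    have "(-s) * (e * (1 - (e-s)^2)) \<le> (-s) * (1 + s)"
    proof (rule mult_left_mono)
      show "e * (1 - (e-s)^2) \<le> 1 + s" using t2 e by linarith
    qed (use False in auto)
    moreover have "(3 * (-s)) * (1 + s) < (2 * (1 - s)) * (1 + s)"
      by (rule mult_strict_right_mono) (use s1 False in auto)
    moreover have "2 * (1 - s^2) = 2 * (1 - s) * (1 + s)" by algebra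
    ultimately show ?thesis unfolding id by linarith
  qed
qed

lemma kder:
  fixes s e :: real
  assumes e0: "0 < e" and fp: "0 < f_s s e"
  shows "(k_sq s has_real_derivative
    2 * (-3 * s * e^3 + 6 * s^2 * e^2 + 3 * s * (1 - s^2) * e + 2 * (1 - s^2))
      / (sqrt (f_s s e) * e^2 * f_s s e)) (at e)"
proof -
  define F where "F = sqrt (f_s s e)"
  have F0: "F > 0" and F2: "F^2 = f_s s e" using fp unfolding F_def by auto
  have Fe: "sqrt (4 * s * e - 3 * e^2 + 4) = F" unfolding F_def f_s_def by (simp add: algebra_simps)
  have "((\<lambda>x. (3 * x^2 + (sqrt (-3 * x^2 + 4 * s * x + 4) - 6 * s) * x + 2 * (s^2 - 1))
                 / (2 * x * sqrt (-3 * x^2 + 4 * s * x + 4))) has_real_derivative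
    2 * (-3 * s * e^3 + 6 * s^2 * e^2 + 3 * s * (1 - s^2) * e + 2 * (1 - s^2))
      / (F * e^2 * F^2)) (at e)"
    using fp e0 unfolding f_s_def
    apply (auto intro!: derivative_eq_intros)
    apply (simp add: Fe)
    using F0 e0 apply (simp add: field_simps)
    using F2 unfolding f_s_def by algebra
  moreover have "(\<lambda>x. (3 * x^2 + (sqrt (-3 * x^2 + 4 * s * x + 4) - 6 * s) * x + 2 * (s^2 - 1))
                 / (2 * x * sqrt (-3 * x^2 + 4 * s * x + 4))) = k_sq s"
    by (rule ext) (simp add: k_sq_def f_s_def)
  ultimately show ?thesis using F2 unfolding F_def by simp
qed

theorem proposition3p5:
  fixes \<omega> c s :: real
  assumes hyp: "\<omega> > c^2 / 4 \<or> (\<omega> = c^2 / 4 \<and> c > 0)"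
    and hs: "s \<in> {-1<..1}" and hc: "c = 2 * s * sqrt \<omega>"
  shows "(\<forall>\<eta> \<in> {beta0 s<..<beta1 s}. 0 < k_sq s \<eta> \<and> k_mod s \<eta> \<in> {0<..<1})
         \<and> strict_mono_on {beta0 s<..<beta1 s} (k_mod s)"
proof -
  have s1: "-1 < s" "s \<le> 1" using hs by auto
  have bnd: "0 < k_sq s e \<and> k_sq s e < 1" if e: "e \<in> {beta0 s<..<beta1 s}" for e
  proof -
    have e': "beta0 s < e" "e < 1 + s" using e unfolding beta1_def by auto
    note B = basic[OF s1 e']
    define F where "F = sqrt (f_s s e)"
    define g where "g = 3 * e^2 - 6 * s * e + 2 * s^2 - 2"
    have F0: "F > 0" using B(4) unfolding F_def by simp
    have pos: "e * F > 0" using B(1) F0 by simp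
    have "g^2 < (e * F)^2" using B(5) unfolding F_def g_def by simp
    then have ab: "\<bar>g\<bar> < e * F" using pos power2_less_imp_less[of "\<bar>g\<bar>" "e * F"] by simp
    have ks: "k_sq s e = (g + e * F) / (2 * (e * F))"
      unfolding k_sq_def F_def[symmetric] g_def by (simp add: algebra_simps)
    show ?thesis unfolding ks using ab pos by (auto simp: field_simps)
  qed
  have mono: "k_sq s x < k_sq s y" if xy: "x \<in> {beta0 s<..<beta1 s}" "y \<in> {beta0 s<..<beta1 s}" "x < y" for x y
  proof (rule DERIV_pos_imp_increasing[OF xy(3)])
    fix z assume z: "x \<le> z" "z \<le> y"
    have e': "beta0 s < z" "z < 1 + s" using z xy unfolding beta1_def by auto
    note B = basic[OF s1 e']
    have Q: "-3 * s * z^3 + 6 * s^2 * z^2 + 3 * s * (1 - s^2) * z + 2 * (1 - s^2) > 0"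
      using Qpos[OF s1 B(1) e'(2) B(2) B(3)] .
    show "\<exists>d. (k_sq s has_real_derivative d) (at z) \<and> 0 < d"
    proof (intro exI conjI)
      show "(k_sq s has_real_derivative
        2 * (-3 * s * z^3 + 6 * s^2 * z^2 + 3 * s * (1 - s^2) * z + 2 * (1 - s^2))
         / (sqrt (f_s s z) * z^2 * f_s s z)) (at z)" by (rule kder[OF B(1) B(4)])
      show "0 < 2 * (-3 * s * z^3 + 6 * s^2 * z^2 + 3 * s * (1 - s^2) * z + 2 * (1 - s^2))
         / (sqrt (f_s s z) * z^2 * f_s s z)"
        using Q B(1) B(4) by (intro divide_pos_pos mult_pos_pos) auto
    qed
  qed
  show ?thesis
  proof
    show "\<forall>\<eta>\<in>{beta0 s<..<beta1 s}. 0 < k_sq s \<eta> \<and> k_mod s \<eta> \<in> {0<..<1}"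
      using bnd unfolding k_mod_def by auto
    show "strict_mono_on {beta0 s<..<beta1 s} (k_mod s)"
      unfolding strict_mono_on_def k_mod_def using mono by auto
  qed
qed

end
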